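(* Let $d\ge 1$ and $k'$ be integers with $k'>2d+3$. Consider an average-based EQ AHG or an average-based AL AHG over $n$ players with $n\ge k'(d+1)$, whose network of friends $G$ contains a (possibly pinched) $(d,k')$-dome gadget on a player set $P$, such that no player of $P$ other than its top player $p^\star$ has a friend outside $P$. Let $\Gamma$ be a coalition structure with $P\in\Gamma$. If a coalition $C$ blocks $\Gamma$, then $C$ contains no player of the base clique of the gadget.
   Context: An AHG is given by a finite player set $N$, $n=|N|$, and a simple undirected graph $G=(N,\mathcal{E})$ (network of friends). For $i\in N$, $F_i$ is the set of neighbors (friends) of $i$ and $E_i=N\setminus(F_i\cup\{i\})$ its enemies. For a coalition $C\ni i$, $\mathrm{val}_i(C)=n|F_i\cap C|-|E_i\cap C|$. Let $\mathrm{avg}_{F_i}(C)=\sum_{c\in C\cap F_i}\mathrm{val}_c(C)/|C\cap F_i|$ (taken to be $0$ if $C\cap F_i=\emptyset$) and $\mathrm{avg}_{F_i\cup\{i\}}(C)=\sum_{c\in (C\cap F_i)\cup\{i\}}\mathrm{val}_c(C)/|(C\cap F_i)\cup\{i\}|$. With a fixed constant $w\ge n^4$, the average-based EQ utility is $\mathrm{util}_i^{\text{avg-EQ}}(C)=\mathrm{avg}_{F_i\cup\{i\}}(C)$ and the average-based AL utility is $\mathrm{util}_i^{\text{avg-AL}}(C)=\mathrm{val}_i(C)+w\cdot\mathrm{avg}_{F_i}(C)$. A coalition structure is a partition $\Gamma$ of $N$; $\Gamma(i)$ is the coalition containing $i$. A nonempty coalition $C$ blocks $\Gamma$ if every $i\in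 C$ has strictly larger utility from $C$ than from $\Gamma(i)$. A $(d,k')$-dome gadget (for integers $d\ge1$, $k'>2d+1$) on player set $P$ with $|P|=k'$ consists of a top player $p^\star$, $d$ mid players $p_1,\dots,p_d$, and the remaining $k'-d-1$ players forming the base clique $K$; $d$ distinct players $p'_1,\dots,p'_d\in K$ are called fringe players. The friendships among players of $P$ are exactly: $p^\star$ with each $p_j$, $p_j$ with $p'_j$ for each $j$, and every pair of players in $K$. A pinched $(d,k')$-dome gadget is obtained from a $(d,k')$-dome gadget by identifying all $d$ mid players into a single mid player $q$; so its friendships within $P$ are exactly $p^\star$ with $q$, $q$ with each $p'_j$, and every pair within the base clique $K$ (of size $k'-d-1$). "$G$ contains the gadget on $P$" means $G[P]$ is exactly this gadget. *)

theory Defs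
  imports Complex_Main "HOL-Library.Disjoint_Sets"
begin

definition friends :: "'a set \<Rightarrow> ('a \<Rightarrow> 'a \<Rightarrow> bool) \<Rightarrow> 'a \<Rightarrow> 'a set" where
  "friends N E i = {j \<in> N. E i j}"

definition enemies :: "'a set \<Rightarrow> ('a \<Rightarrow> 'a \<Rightarrow> bool) \<Rightarrow> 'a \<Rightarrow> 'a set" where
  "enemies N E i = N - (friends N E i \<union> {i})"

definition val :: "'a set \<Rightarrow> ('a \<Rightarrow> 'a \<Rightarrow> bool) \<Rightarrow> 'a \<Rightarrow> 'a set \<Rightarrow> real" where
  "val N E i C = real (card N) * real (card (friends N E i \<inter> C))
                 - real (card (enemies N E i \<inter> C))"

definition avg_F :: "'a set \<Rightarrow> ('a \<Rightarrow> 'a \<Rightarrow> bool) \<Rightarrow> 'a \<Rightarrow> 'a set \<Rightarrow> real" where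
  "avg_F N E i C = (if C \<inter> friends N E i = {} then 0
     else (\<Sum>c \<in> C \<inter> friends N E i. val N E c C) / real (card (C \<inter> friends N E i)))"

definition avg_Fi :: "'a set \<Rightarrow> ('a \<Rightarrow> 'a \<Rightarrow> bool) \<Rightarrow> 'a \<Rightarrow> 'a set \<Rightarrow> real" where
  "avg_Fi N E i C = (\<Sum>c \<in> insert i (C \<inter> friends N E i). val N E c C)
                     / real (card (insert i (C \<inter> friends N E i)))"

definition util_avgEQ :: "'a set \<Rightarrow> ('a \<Rightarrow> 'a \<Rightarrow> bool) \<Rightarrow> 'a \<Rightarrow> 'a set \<Rightarrow> real" where
  "util_avgEQ N E i C = avg_Fi N E i C"

definition util_avgAL :: "'a set \<Rightarrow> ('a \<Rightarrow> 'a \<Rightarrow> bool) \<Rightarrow> real \<Rightarrow> 'a \<Rightarrow> 'a set \<Rightarrow> real" where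
  "util_avgAL N E w i C = val N E i C + w * avg_F N E i C"

definition coal_of :: "'a set set \<Rightarrow> 'a \<Rightarrow> 'a set" where
  "coal_of \<Gamma> i = (THE S. S \<in> \<Gamma> \<and> i \<in> S)"

definition blocks :: "'a set \<Rightarrow> ('a \<Rightarrow> 'a set \<Rightarrow> real) \<Rightarrow> 'a set set \<Rightarrow> 'a set \<Rightarrow> bool" where
  "blocks N util \<Gamma> C \<longleftrightarrow> C \<noteq> {} \<and> C \<subseteq> N \<and>
     (\<forall>i \<in> C. util i C > util i (coal_of \<Gamma> i))"

text \<open>(d,k')-dome gadget on P with top p, mid players m 1..m d, base clique K,
  fringe players fr 1..fr d.\<close>
definition dome_gadget :: "'a set \<Rightarrow> ('a \<Rightarrow> 'a \<Rightarrow> bool) \<Rightarrow> nat \<Rightarrow> nat \<Rightarrow> 'a set \<Rightarrow> 'a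
    \<Rightarrow> (nat \<Rightarrow> 'a) \<Rightarrow> 'a set \<Rightarrow> (nat \<Rightarrow> 'a) \<Rightarrow> bool" where
  "dome_gadget N E d k' P p m K fr \<longleftrightarrow>
     d \<ge> 1 \<and> k' > 2*d+1 \<and> P \<subseteq> N \<and> card P = k' \<and> p \<in> P \<and>
     inj_on m {1..d} \<and> m ` {1..d} \<subseteq> P \<and> p \<notin> m ` {1..d} \<and>
     K = P - {p} - m ` {1..d} \<and>
     inj_on fr {1..d} \<and> fr ` {1..d} \<subseteq> K \<and>
     (\<forall>x\<in>P. \<forall>y\<in>P. E x y \<longleftrightarrow>
        ((\<exists>j\<in>{1..d}. {x,y} = {p, m j} \<or> {x,y} = {m j, fr j}) \<or>
         (x \<in> K \<and> y \<in> K \<and> x \<noteq> y)))"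

text \<open>pinched (d,k')-dome gadget: the d mid players identified into one mid player q;
  the base clique K still has k'-d-1 players.\<close>
definition pinched_dome_gadget :: "'a set \<Rightarrow> ('a \<Rightarrow> 'a \<Rightarrow> bool) \<Rightarrow> nat \<Rightarrow> nat \<Rightarrow> 'a set
    \<Rightarrow> 'a \<Rightarrow> 'a \<Rightarrow> 'a set \<Rightarrow> (nat \<Rightarrow> 'a) \<Rightarrow> bool" where
  "pinched_dome_gadget N E d k' P p q K fr \<longleftrightarrow>
     d \<ge> 1 \<and> k' > 2*d+1 \<and> P \<subseteq> N \<and> finite K \<and> card K = k' - d - 1 \<and>
     p \<noteq> q \<and> p \<notin> K \<and> q \<notin> K \<and> P = insert p (insert q K) \<and>
     inj_on fr {1..d} \<and> fr ` {1..d} \<subseteq> K \<and>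
     (\<forall>x\<in>P. \<forall>y\<in>P. E x y \<longleftrightarrow>
        ({x,y} = {p, q} \<or> (\<exists>j\<in>{1..d}. {x,y} = {q, fr j}) \<or>
         (x \<in> K \<and> y \<in> K \<and> x \<noteq> y)))"

end

theory Submission
  imports Defs
begin

lemma coal:
  assumes "partition_on N G" "P \<in> G" "y \<in> P"
  shows "coal_of G y = P"
  unfolding coal_of_def
proof (rule the1_equality)
  show "\<exists>!S. S \<in> G \<and> y \<in> S"
    using assms partition_onD2[OF assms(1)] by (metis disjointD disjoint_iff)
qed (use assms in auto)

definition avgset :: "('a \<Rightarrow> real) \<Rightarrow> 'a set \<Rightarrow> real" where
  "avgset f T = (if T = {} then 0 else sum f T / real (card T))"

definition Tset :: "bool \<Rightarrow> 'a set \<Rightarrow> ('a \<Rightarrow> 'a \<Rightarrow> bool) \<Rightarrow> 'a \<Rightarrow> 'a set \<Rightarrow> 'a set" where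
  "Tset b N E y S = (if b then insert y (S \<inter> friends N E y) else S \<inter> friends N E y)"

lemma avgset_le:
  assumes "finite T" "\<And>c. c \<in> T \<Longrightarrow> f c \<le> B" "0 \<le> B"
  shows "avgset f T \<le> B"
proof (cases "T = {}")
  case True then show ?thesis using assms by (simp add: avgset_def)
next
  case False
  then have cT: "card T > 0" using assms(1) by (simp add: card_gt_0_iff)
  have "sum f T \<le> real (card T) * B" using sum_mono[of T f "\<lambda>_. B"] assms(2) by simp
  then show ?thesis using False cT by (simp add: avgset_def divide_le_eq mult.commute)
qed

lemma avgset_gt:
  assumes "finite T" "T \<noteq> {}" "sum f T > real (card T) * B"
  shows "avgset f T > B"
  using assms by (simp add: avgset_def card_gt_0_iff less_divide_eq mult.commute)

lemma avgset_mono_same: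
  assumes "sum f T \<le> sum g T"  shows "avgset f T \<le> avgset g T"
  using assms by (simp add: avgset_def divide_right_mono)

lemma avgset_strict_same:
  assumes "finite T" "T \<noteq> {}" "sum f T < sum g T" shows "avgset f T < avgset g T"
  using assms by (simp add: avgset_def divide_strict_right_mono card_gt_0_iff)

lemma val_le: "val N E c S \<le> real (card N) * real (card (friends N E c \<inter> S))"
  by (simp add: val_def)

lemma val_ge: "val N E c S \<ge> real (card N) * real (card (friends N E c \<inter> S)) - real (card (enemies N E c \<inter> S))"
  by (simp add: val_def)

lemma val_diff:
  assumes "finite N"
  shows "val N E c C - val N E c P \<le> real (card N) * (real (card (friends N E c \<inter> C)) - real (card (friends N E c \<inter> P))) + real (card (enemies N E c \<inter> (P - C)))"
proof -
  have fin: "finite (enemies N E c)" using assms by (simp add: enemies_def)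
  have "enemies N E c \<inter> P \<subseteq> (enemies N E c \<inter> C) \<union> (enemies N E c \<inter> (P - C))" by blast
  then have "card (enemies N E c \<inter> P) \<le> card ((enemies N E c \<inter> C) \<union> (enemies N E c \<inter> (P - C)))"
    by (intro card_mono) (use fin in auto)
  also have "... \<le> card (enemies N E c \<inter> C) + card (enemies N E c \<inter> (P - C))" by (rule card_Un_le)
  finally show ?thesis by (simp add: val_def algebra_simps)
qed

definition ival :: "'a set \<Rightarrow> ('a \<Rightarrow> 'a \<Rightarrow> bool) \<Rightarrow> 'a \<Rightarrow> 'a set \<Rightarrow> int" where
  "ival N E i C = int (card N) * int (card (friends N E i \<inter> C)) - int (card (enemies N E i \<inter> C))"

lemma val_ival: "val N E i C = of_int (ival N E i C)" by (simp add: val_def ival_def)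

lemma avgset_repr:
  assumes "finite T" "card T \<le> B" "1 \<le> B"
  shows "\<exists>a b. 1 \<le> b \<and> b \<le> int B \<and> avgset (\<lambda>c. of_int (g c)) T = of_int a / of_int b"
proof (cases "T = {}")
  case True then show ?thesis using assms by (intro exI[of _ 0] exI[of _ 1]) (simp add: avgset_def)
next
  case False
  then have "card T \<ge> 1" using assms(1) by (simp add: Suc_le_eq card_gt_0_iff)
  then show ?thesis using False assms
    by (intro exI[of _ "sum g T"] exI[of _ "int (card T)"]) (simp add: avgset_def)
qed

lemma gran:
  fixes a b c e :: int and B :: real
  assumes "1 \<le> b" "1 \<le> e" "real_of_int b \<le> B" "real_of_int e \<le> B"
    and lt: "of_int a / of_int b < (of_int c / of_int e :: real)"
  shows "of_int c / of_int e - of_int a / of_int b \<ge> 1 / B^2"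
proof -
  have bp: "real_of_int b > 0" "real_of_int e > 0" using assms by auto
  have "real_of_int a * of_int e < of_int c * of_int b" using lt bp by (simp add: field_simps)
  then have "a * e < c * b" by (metis of_int_less_iff of_int_mult)
  then have "c*b - a*e \<ge> 1" by simp
  then have h: "real_of_int (c*b - a*e) \<ge> 1" by (metis of_int_1_le_iff)
  have eq: "of_int c / of_int e - of_int a / of_int b = real_of_int (c*b - a*e) / (of_int b * of_int e)"
    using bp by (simp add: field_simps)
  have "1 / B^2 \<le> 1 / (of_int b * of_int e)"
  proof -
    have "real_of_int b * of_int e \<le> B * B" using assms bp by (intro mult_mono) auto
    then show ?thesis using bp by (simp add: power2_eq_square frac_le)
  qed
  also have "... \<le> real_of_int (c*b - a*e) / (of_int b * of_int e)"
    using h bp by (intro divide_right_mono) auto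
  finally show ?thesis using eq by simp
qed
lemma EQ_avg: "util_avgEQ N E y S = avgset (\<lambda>c. val N E c S) (Tset True N E y S)"
  by (simp add: util_avgEQ_def avg_Fi_def avgset_def Tset_def)

lemma AL_avg: "avg_F N E y S = avgset (\<lambda>c. val N E c S) (Tset False N E y S)"
  by (simp add: avg_F_def avgset_def Tset_def)

lemma AL_U1:
  assumes finN: "finite N" and FP: "friends N E y \<subseteq> P" and PN: "P \<subseteq> N"
   and cP: "card P \<le> k'" and nk: "2 * k' \<le> card N" and k1: "1 \<le> k'" and w: "w \<ge> real (card N)^4"
   and lt: "avg_F N E y C < avg_F N E y P"
  shows "util_avgAL N E w y C < util_avgAL N E w y P"
proof -
  define n where "n = real (card N)"
  have finF: "finite (friends N E y)" using finN by (simp add: friends_def)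
  have finP: "finite P" using PN finN finite_subset by blast
  have cF: "card (friends N E y) \<le> k'" using card_mono[OF finP FP] cP by simp
  have c1: "card (C \<inter> friends N E y) \<le> k'" using card_mono[OF finF, of "C \<inter> friends N E y"] cF by auto
  have c2: "card (P \<inter> friends N E y) \<le> k'" using card_mono[OF finF, of "P \<inter> friends N E y"] cF by auto
  have aC: "avg_F N E y C = avgset (\<lambda>c. of_int (ival N E c C)) (C \<inter> friends N E y)"
    by (simp add: avg_F_def avgset_def val_ival)
  have aP: "avg_F N E y P = avgset (\<lambda>c. of_int (ival N E c P)) (P \<inter> friends N E y)"
    by (simp add: avg_F_def avgset_def val_ival)
  obtain a1 b1 where r1: "1 \<le> b1" "b1 \<le> int k'" "avg_F N E y C = of_int a1 / of_int b1"
    using avgset_repr[of "C \<inter> friends N E y" k' "\<lambda>c. ival N E c C"] c1 k1 finF aC by auto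
  obtain a2 b2 where r2: "1 \<le> b2" "b2 \<le> int k'" "avg_F N E y P = of_int a2 / of_int b2"
    using avgset_repr[of "P \<inter> friends N E y" k' "\<lambda>c. ival N E c P"] c2 k1 finF aP by auto
  have gap: "avg_F N E y P - avg_F N E y C \<ge> 1 / (real k')^2"
    using gran[of b1 b2 "real k'" a1 a2] r1 r2 lt by simp
  have kpos: "real k' > 0" using k1 by simp
  have kn: "real k' \<le> n" using nk n_def by simp
  have w0: "w \<ge> 0" using w by (smt (verit) zero_le_power of_nat_0_le_iff)
  have "w * (avg_F N E y P - avg_F N E y C) \<ge> w * (1 / (real k')^2)"
    using gap w0 by (intro mult_left_mono) auto
  moreover have "w * (1 / (real k')^2) \<ge> n^2"
  proof -
    have "n^2 * (real k')^2 \<le> n^2 * n^2" using kn kpos by (intro mult_left_mono power_mono) auto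
    also have "... = n^4" by algebra
    also have "... \<le> w" using w n_def by simp
    finally have "n^2 * (real k')^2 \<le> w" .
    then show ?thesis using kpos by (simp add: field_simps)
  qed
  ultimately have big: "w * (avg_F N E y P - avg_F N E y C) \<ge> n^2" by linarith
  have v1: "val N E y C \<le> n * real k'"
  proof -
    have "card (friends N E y \<inter> C) \<le> k'" using card_mono[OF finF, of "friends N E y \<inter> C"] cF by auto
    then have "n * real (card (friends N E y \<inter> C)) \<le> n * real k'" using n_def by (intro mult_left_mono) auto
    then show ?thesis using val_le[of N E y C] n_def by simp
  qed
  have v2: "val N E y P \<ge> - real k'"
  proof -
    have "card (enemies N E y \<inter> P) \<le> card P" using finP by (intro card_mono) auto
    then show ?thesis using val_ge[of N E y P] cP n_def
      by (smt (verit) of_nat_0_le_iff of_nat_le_iff mult_nonneg_nonneg)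
  qed
  have "n * real k' + real k' < n^2"
  proof -
    have "2 * real k' \<le> n" using nk n_def by simp
    then have "n * (2 * real k') \<le> n * n" using kpos by (intro mult_left_mono) auto
    moreover have "real k' < n * real k'" using kpos \<open>2 * real k' \<le> n\<close> k1 by simp
    ultimately show ?thesis by (simp add: power2_eq_square algebra_simps)
  qed
  then show ?thesis using big v1 v2 unfolding util_avgAL_def by (simp add: algebra_simps)
qed
definition absg :: "'a set \<Rightarrow> ('a \<Rightarrow> 'a \<Rightarrow> bool) \<Rightarrow> nat \<Rightarrow> nat \<Rightarrow> 'a set \<Rightarrow> 'a \<Rightarrow> 'a set \<Rightarrow> 'a set \<Rightarrow> ('a \<Rightarrow> 'a) \<Rightarrow> bool" where
  "absg N E d k' P p K Fr mid \<longleftrightarrow>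
    P \<subseteq> N \<and> p \<in> P \<and> K \<subseteq> P \<and> p \<notin> K \<and>
    card K = k' - d - 1 \<and> card P \<le> k' \<and> card (P - K) \<le> d + 1 \<and>
    Fr \<subseteq> K \<and> Fr \<noteq> {} \<and> card Fr \<le> d \<and>
    (\<forall>c\<in>Fr. mid c \<in> P \<and> mid c \<notin> K \<and> mid c \<noteq> p) \<and>
    P = insert p (K \<union> mid ` Fr) \<and>
    (\<forall>c\<in>K. friends N E c = (K - {c}) \<union> (if c \<in> Fr then {mid c} else {})) \<and>
    (\<forall>c\<in>Fr. friends N E (mid c) \<subseteq> P \<and> p \<in> friends N E (mid c) \<and> c \<in> friends N E (mid c)
        \<and> card (friends N E (mid c)) \<le> d + 1)"

lemma core:
  fixes U :: "'a \<Rightarrow> 'a set \<Rightarrow> real"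
  assumes finN: "finite N" and G: "absg N E d k' P p K Fr mid"
    and d1: "d \<ge> 1" and kd: "k' > 2*d+3" and nk: "card N \<ge> k' * (d+1)"
    and U1: "\<And>y. y \<in> K \<Longrightarrow> avgset (\<lambda>c. val N E c C) (Tset b N E y C) < avgset (\<lambda>c. val N E c P) (Tset b N E y P) \<Longrightarrow> U y C < U y P"
    and U2: "\<And>y. y \<in> K \<Longrightarrow> avgset (\<lambda>c. val N E c C) (Tset b N E y C) \<le> avgset (\<lambda>c. val N E c P) (Tset b N E y P) \<Longrightarrow> val N E y C \<le> val N E y P \<Longrightarrow> U y C \<le> U y P"
    and blk: "\<And>y. y \<in> C \<Longrightarrow> y \<in> K \<Longrightarrow> U y C > U y P"
  shows "C \<inter> K = {}"
proof (rule ccontr)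
  assume "C \<inter> K \<noteq> {}"
  then obtain x where xC: "x \<in> C" and xK: "x \<in> K" by blast
  note GG = G[unfolded absg_def]
  have PN: "P \<subseteq> N" using GG by (elim conjE) assumption
  have pP: "p \<in> P" using GG by (elim conjE) assumption
  have KP: "K \<subseteq> P" using GG by (elim conjE) assumption
  have pK: "p \<notin> K" using GG by (elim conjE) assumption
  have cK: "card K = k' - d - 1" using GG by (elim conjE) assumption
  have cP: "card P \<le> k'" using GG by (elim conjE) assumption
  have cPK: "card (P - K) \<le> d + 1" using GG by (elim conjE) assumption
  have FrK: "Fr \<subseteq> K" using GG by (elim conjE) assumption
  have Frne: "Fr \<noteq> {}" using GG by (elim conjE) assumption
  have cFr: "card Fr \<le> d" using GG by (elim conjE) assumption
  have midP': "\<forall>c\<in>Fr. mid c \<in> P \<and> mid c \<notin> K \<and> mid c \<noteq> p" using GG by (elim conjE) assumption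
  have Pdec: "P = insert p (K \<union> mid ` Fr)" using GG by (elim conjE) assumption
  have FK': "\<forall>c\<in>K. friends N E c = (K - {c}) \<union> (if c \<in> Fr then {mid c} else {})" using GG by (elim conjE) assumption
  have Fmid': "\<forall>c\<in>Fr. friends N E (mid c) \<subseteq> P \<and> p \<in> friends N E (mid c) \<and> c \<in> friends N E (mid c) \<and> card (friends N E (mid c)) \<le> d + 1" using GG by (elim conjE) assumption
  have midP: "\<And>c. c \<in> Fr \<Longrightarrow> mid c \<in> P \<and> mid c \<notin> K \<and> mid c \<noteq> p" using midP' by blast
  have FK: "\<And>c. c \<in> K \<Longrightarrow> friends N E c = (K - {c}) \<union> (if c \<in> Fr then {mid c} else {})" using FK' by blast
  have Fmid: "\<And>c. c \<in> Fr \<Longrightarrow> friends N E (mid c) \<subseteq> P \<and> p \<in> friends N E (mid c) \<and> c \<in> friends N E (mid c) \<and> card (friends N E (mid c)) \<le> d + 1" using Fmid' by blast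
  define n where "n = real (card N)"
  define \<kappa> where "\<kappa> = card K"
  have finP: "finite P" using PN finN finite_subset by blast
  have finK: "finite K" using KP finP finite_subset by blast
  have finF: "\<And>c. finite (friends N E c)" using finN by (simp add: friends_def)
  have finE: "\<And>c. finite (enemies N E c)" using finN by (simp add: enemies_def)
  have kap: "\<kappa> \<ge> d + 3" "\<kappa> + d + 1 = k'" using cK kd \<kappa>_def by auto
  have nk': "n \<ge> real k' * (real d + 1)" using nk n_def by (metis of_nat_1 of_nat_add of_nat_le_iff of_nat_mult)
  have n0: "n \<ge> 0" using n_def by simp
  have kapn: "real \<kappa> * (real d + 1) < n"
  proof -
    have "real \<kappa> < real k'" using kap by simp
    then have "real \<kappa> * (real d + 1) < real k' * (real d + 1)" by (intro mult_strict_right_mono) auto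
    then show ?thesis using nk' by linarith
  qed
  have kn: "real k' \<le> n" using nk' by (smt (verit) of_nat_0_le_iff mult_le_cancel_left1 d1)
  have FP: "\<And>c. c \<in> K \<Longrightarrow> friends N E c \<subseteq> P"
    using FK midP KP by auto
  have cFK: "\<And>c. c \<in> K \<Longrightarrow> card (friends N E c) = \<kappa> - 1 + (if c \<in> Fr then 1 else 0)"
  proof -
    fix c assume cK': "c \<in> K"
    have cKc: "card (K - {c}) = \<kappa> - 1" using cK' finK \<kappa>_def by (simp add: card_Diff_singleton)
    show "card (friends N E c) = \<kappa> - 1 + (if c \<in> Fr then 1 else 0)"
    proof (cases "c \<in> Fr")
      case True
      then have e: "friends N E c = insert (mid c) (K - {c})" using FK[OF cK'] by simp
      have "mid c \<notin> K - {c}" using midP True by blast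
      then have "card (insert (mid c) (K - {c})) = Suc (card (K - {c}))" using finK by (simp add: card_insert_disjoint)
      then show ?thesis using e cKc True by simp
    next
      case False
      then have "friends N E c = K - {c}" using FK[OF cK'] by simp
      then show ?thesis using cKc False by simp
    qed
  qed
  have EK: "\<And>c. c \<in> K \<Longrightarrow> enemies N E c \<inter> P \<subseteq> P - K"
    using FK unfolding enemies_def by auto
  have cEK: "\<And>c X. c \<in> K \<Longrightarrow> X \<subseteq> P \<Longrightarrow> card (enemies N E c \<inter> X) \<le> d + 1"
  proof -
    fix c X assume "c \<in> K" "X \<subseteq> P"
    then have "enemies N E c \<inter> X \<subseteq> P - K" using EK by blast
    then have "card (enemies N E c \<inter> X) \<le> card (P - K)" using finP by (intro card_mono) auto
    then show "card (enemies N E c \<inter> X) \<le> d + 1" using cPK by simp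
  qed
  have valKP: "\<And>c. c \<in> K \<Longrightarrow> val N E c P \<ge> n * (real \<kappa> - 1) - (real d + 1) + (if c \<in> Fr then n else 0)"
  proof -
    fix c assume cK': "c \<in> K"
    have "friends N E c \<inter> P = friends N E c" using FP[OF cK'] by auto
    then have "val N E c P \<ge> n * real (card (friends N E c)) - real (card (enemies N E c \<inter> P))"
      using val_ge[of N E c P] n_def by simp
    moreover have "real (card (enemies N E c \<inter> P)) \<le> real d + 1" using cEK[OF cK', of P] by simp
    moreover have "real (card (friends N E c)) = real \<kappa> - 1 + (if c \<in> Fr then 1 else 0)"
      using cFK[OF cK'] kap by auto
    ultimately show "val N E c P \<ge> n * (real \<kappa> - 1) - (real d + 1) + (if c \<in> Fr then n else 0)"
      by (auto simp: algebra_simps split: if_splits)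
  qed
  have valmidP: "\<And>c. c \<in> Fr \<Longrightarrow> val N E (mid c) P \<ge> 2 * n - real k'"
  proof -
    fix c assume cF: "c \<in> Fr"
    have "{p, c} \<subseteq> friends N E (mid c) \<inter> P" using Fmid[OF cF] pP FrK cF KP by auto
    moreover have "p \<noteq> c" using pK FrK cF by auto
    ultimately have "card (friends N E (mid c) \<inter> P) \<ge> 2"
      using card_mono[OF _ \<open>{p, c} \<subseteq> _\<close>] finF by fastforce
    then have a: "n * real (card (friends N E (mid c) \<inter> P)) \<ge> n * 2" using n0 by (intro mult_left_mono) auto
    have "card (enemies N E (mid c) \<inter> P) \<le> card P" using finP by (intro card_mono) auto
    then have b: "real (card (enemies N E (mid c) \<inter> P)) \<le> real k'" using cP by simp
    show "val N E (mid c) P \<ge> 2 * n - real k'" using val_ge[of N E "mid c" P] a b n_def by simp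
  qed
  have valmid_le: "\<And>c S. c \<in> Fr \<Longrightarrow> val N E (mid c) S \<le> n * (real d + 1)"
  proof -
    fix c S assume cF: "c \<in> Fr"
    have "card (friends N E (mid c) \<inter> S) \<le> d + 1"
      using card_mono[OF finF, of "friends N E (mid c) \<inter> S" "mid c"] Fmid[OF cF] by auto
    then have "n * real (card (friends N E (mid c) \<inter> S)) \<le> n * (real d + 1)" using n0 by (intro mult_left_mono) auto
    then show "val N E (mid c) S \<le> n * (real d + 1)" using val_le[of N E "mid c" S] n_def by simp
  qed
  have valKC: "\<And>c. c \<in> C \<Longrightarrow> c \<in> K \<Longrightarrow> val N E c C \<le> n * real (card (C \<inter> K))"
  proof -
    fix c assume cC: "c \<in> C" and cK': "c \<in> K"
    have finCK: "finite (C \<inter> K)" using finK by simp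
    have sub: "friends N E c \<inter> C \<subseteq> insert (mid c) ((C \<inter> K) - {c})" using FK[OF cK'] by auto
    have "card (friends N E c \<inter> C) \<le> card (insert (mid c) ((C \<inter> K) - {c}))"
      using finCK by (intro card_mono[OF _ sub]) simp
    also have "... \<le> Suc (card ((C \<inter> K) - {c}))" using finCK by (simp add: card_insert_if)
    also have "... = card (C \<inter> K)" using cC cK' finCK
      by (simp add: card_Diff_singleton) (metis Suc_pred card_gt_0_iff empty_iff IntI)
    finally have "n * real (card (friends N E c \<inter> C)) \<le> n * real (card (C \<inter> K))"
      using n0 by (intro mult_left_mono) auto
    then show "val N E c C \<le> n * real (card (C \<inter> K))" using val_le[of N E c C] n_def by simp
  qed
  have avgU: "\<And>y. y \<in> K \<Longrightarrow> y \<in> C \<Longrightarrow> \<not> (avgset (\<lambda>c. val N E c C) (Tset b N E y C) < avgset (\<lambda>c. val N E c P) (Tset b N E y P))"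
    using U1 blk by fastforce
  have TsubP: "\<And>y S. y \<in> K \<Longrightarrow> Tset b N E y S \<subseteq> insert y (friends N E y)"
    by (auto simp: Tset_def)
  have finT: "\<And>y S. y \<in> K \<Longrightarrow> finite (Tset b N E y S)"
    using TsubP finF by (meson finite_insert finite_subset)
  have KC: "K \<subseteq> C"
  proof (rule ccontr)
    assume nKC: "\<not> K \<subseteq> C"
    have "C \<inter> K \<subset> K" using nKC by blast
    then have cA: "card (C \<inter> K) < \<kappa>" using finK \<kappa>_def by (simp add: psubset_card_mono)
    show False
    proof (cases "\<exists>y \<in> C \<inter> K. y \<notin> Fr")
      case True
      then obtain y where yC: "y \<in> C" and yK: "y \<in> K" and yF: "y \<notin> Fr" by blast
      have Fy: "friends N E y = K - {y}" using FK[OF yK] yF by simp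
      have TC: "Tset b N E y C \<subseteq> C \<inter> K" using Fy yC yK by (auto simp: Tset_def)
      have aC: "avgset (\<lambda>c. val N E c C) (Tset b N E y C) \<le> n * (real \<kappa> - 1)"
      proof (rule avgset_le[OF finT[OF yK]])
        fix c assume "c \<in> Tset b N E y C"
        then have "c \<in> C" "c \<in> K" using TC by auto
        then have "val N E c C \<le> n * real (card (C \<inter> K))" by (rule valKC)
        also have "... \<le> n * (real \<kappa> - 1)" using cA n0 by (intro mult_left_mono) auto
        finally show "val N E c C \<le> n * (real \<kappa> - 1)" .
      next
        show "0 \<le> n * (real \<kappa> - 1)" using kap n0 by simp
      qed
      define T where "T = Tset b N E y P"
      have TP: "T \<subseteq> K" "Fr \<subseteq> T" using Fy yK FrK yF KP by (auto simp: T_def Tset_def)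
      have finT': "finite T" using TP finK finite_subset by blast
      obtain f0 where f0: "f0 \<in> Fr" using Frne by blast
      have Tne: "T \<noteq> {}" using TP f0 by blast
      have cT: "card T \<le> \<kappa>" using card_mono[OF finK TP(1)] \<kappa>_def by simp
      have "sum (\<lambda>c. val N E c P) T \<ge> sum (\<lambda>c. n * (real \<kappa> - 1) - (real d + 1) + (if c = f0 then n else 0)) T"
      proof (rule sum_mono)
        fix c assume cT': "c \<in> T"
        then have "c \<in> K" using TP by blast
        from valKP[OF this] show "n * (real \<kappa> - 1) - (real d + 1) + (if c = f0 then n else 0) \<le> val N E c P"
          using f0 n0 by (auto split: if_splits)
      qed
      also have "sum (\<lambda>c. n * (real \<kappa> - 1) - (real d + 1) + (if c = f0 then n else 0)) T
          = real (card T) * (n * (real \<kappa> - 1) - (real d + 1)) + n"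
        using finT' TP f0 by (simp add: sum.distrib sum.delta' subset_iff)
      finally have sP: "sum (\<lambda>c. val N E c P) T \<ge> real (card T) * (n * (real \<kappa> - 1) - (real d + 1)) + n" .
      have "real (card T) * (real d + 1) < n"
      proof -
        have "real (card T) * (real d + 1) \<le> real \<kappa> * (real d + 1)" using cT by (intro mult_right_mono) auto
        then show ?thesis using kapn by linarith
      qed
      then have "sum (\<lambda>c. val N E c P) T > real (card T) * (n * (real \<kappa> - 1))"
        using sP by (simp add: algebra_simps)
      then have "avgset (\<lambda>c. val N E c P) T > n * (real \<kappa> - 1)"
        by (rule avgset_gt[OF finT' Tne])
      then show False using aC avgU[OF yK yC] unfolding T_def by linarith
    next
      case False
      then have AF: "C \<inter> K \<subseteq> Fr" by blast
      have xF: "x \<in> Fr" using AF xC xK by blast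
      have cA': "card (C \<inter> K) \<le> d" using card_mono[OF _ AF] cFr finK FrK finite_subset by fastforce
      have Fx: "friends N E x = insert (mid x) (K - {x})" using FK[OF xK] xF by auto
      have TC: "Tset b N E x C \<subseteq> insert (mid x) (C \<inter> K)" using Fx xC xK by (auto simp: Tset_def)
      have aC: "avgset (\<lambda>c. val N E c C) (Tset b N E x C) \<le> n * (real d + 1)"
      proof (rule avgset_le[OF finT[OF xK]])
        fix c assume "c \<in> Tset b N E x C"
        then have "c = mid x \<or> (c \<in> C \<and> c \<in> K)" using TC by auto
        then show "val N E c C \<le> n * (real d + 1)"
        proof
          assume "c = mid x" then show ?thesis using valmid_le[OF xF] by simp
        next
          assume "c \<in> C \<and> c \<in> K"
          then have "val N E c C \<le> n * real (card (C \<inter> K))" using valKC by blast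
          also have "... \<le> n * (real d + 1)" using cA' n0 by (intro mult_left_mono) auto
          finally show ?thesis .
        qed
      next
        show "0 \<le> n * (real d + 1)" using n0 by simp
      qed
      define T where "T = Tset b N E x P"
      have TP1: "insert (mid x) (K - {x}) \<subseteq> T" using Fx FP[OF xK] by (auto simp: T_def Tset_def)
      have TP2: "T \<subseteq> insert (mid x) K" using Fx FP[OF xK] xK by (auto simp: T_def Tset_def)
      have finT': "finite T" using TP2 finK finite_subset by blast
      have mT: "mid x \<in> T" using TP1 by blast
      have Tne: "T \<noteq> {}" using mT by blast
      have mK: "mid x \<notin> K" using midP[OF xF] by blast
      have cT: "card T \<ge> \<kappa>"
      proof -
        have "card (insert (mid x) (K - {x})) = Suc (\<kappa> - 1)"
          using mK finK xK \<kappa>_def by (simp add: card_Diff_singleton)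
        moreover have "card (insert (mid x) (K - {x})) \<le> card T" using card_mono[OF finT' TP1] .
        ultimately show ?thesis using kap by linarith
      qed
      define A where "A = n * (real d + 2) - (real d + 1)"
      have "sum (\<lambda>c. val N E c P) T \<ge> sum (\<lambda>c. A + (if c = mid x then (2 * n - real k') - A else 0)) T"
      proof (rule sum_mono)
        fix c assume cT': "c \<in> T"
        show "A + (if c = mid x then (2 * n - real k') - A else 0) \<le> val N E c P"
        proof (cases "c = mid x")
          case True then show ?thesis using valmidP[OF xF] by simp
        next
          case False
          then have cK': "c \<in> K" using cT' TP2 by blast
          have "n * (real d + 2) \<le> n * (real \<kappa> - 1)" using kap n0 by (intro mult_left_mono) auto
          then have "A \<le> n * (real \<kappa> - 1) - (real d + 1)" unfolding A_def by linarith
          then show ?thesis using valKP[OF cK'] False n0 by (auto split: if_splits)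
        qed
      qed
      also have "sum (\<lambda>c. A + (if c = mid x then (2 * n - real k') - A else 0)) T
          = real (card T) * A + ((2 * n - real k') - A)"
        using finT' mT by (simp add: sum.distrib sum.delta')
      finally have sP: "sum (\<lambda>c. val N E c P) T \<ge> real (card T) * A + ((2 * n - real k') - A)" .
      have "real (card T) * A + ((2 * n - real k') - A) > real (card T) * (n * (real d + 1))"
      proof -
        define t where "t = real (card T)"
        have t1: "t \<ge> real d + 3" using cT kap t_def by simp
        have t2: "t \<le> real k'"
        proof -
          have "card T \<le> card (insert (mid x) K)" using card_mono[OF _ TP2] finK by simp
          also have "... \<le> Suc \<kappa>" using finK \<kappa>_def by (simp add: card_insert_if)
          finally show ?thesis using kap t_def by simp
        qed
        have "t * A - t * (n * (real d + 1)) = t * (n - (real d + 1))" unfolding A_def by (simp add: algebra_simps)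
        moreover have "t * (n - (real d + 1)) \<ge> (real d + 3) * (n - (real d + 1))"
          using t1 kn kap by (intro mult_right_mono) auto
        moreover have "(real d + 3) * (n - (real d + 1)) + (2 * n - real k') - A > 0"
        proof -
          have "(real d + 3) * (n - (real d + 1)) + (2 * n - real k') - A
                = 3 * n - (real d + 2) * (real d + 1) - real k'" unfolding A_def by (simp add: algebra_simps)
          moreover have "(real d + 2) * (real d + 1) + real k' < 3 * n"
          proof -
            have "real d + 2 \<le> real k'" using kap by simp
            then have "(real d + 2) * (real d + 1) \<le> real k' * (real d + 1)" by (intro mult_right_mono) auto
            moreover have "real k' \<ge> 1" using kap by simp
            ultimately show ?thesis using nk' kn by linarith
          qed
          ultimately show ?thesis by linarith
        qed
        ultimately show ?thesis unfolding t_def by linarith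
      qed
      then have "sum (\<lambda>c. val N E c P) T > real (card T) * (n * (real d + 1))" using sP by linarith
      then have "avgset (\<lambda>c. val N E c P) T > n * (real d + 1)"
        by (rule avgset_gt[OF finT' Tne])
      then show False using aC avgU[OF xK xC] unfolding T_def by linarith
    qed
  qed
  have nonfr: "\<exists>y. y \<in> K \<and> y \<notin> Fr"
  proof (rule ccontr)
    assume "\<not> ?thesis"
    then have "K \<subseteq> Fr" by blast
    then have "card K \<le> card Fr" using finK FrK finite_subset by (metis card_mono)
    then show False using cFr kap \<kappa>_def by simp
  qed
  then obtain y0 where y0K: "y0 \<in> K" and y0F: "y0 \<notin> Fr" by blast
  have Fy0: "friends N E y0 = K - {y0}" using FK[OF y0K] y0F by simp
  define T0 where "T0 = Tset b N E y0 P"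
  have T0eq: "Tset b N E y0 C = T0" using Fy0 KC KP unfolding T0_def Tset_def by auto
  have T0K: "T0 \<subseteq> K" "Fr \<subseteq> T0" using Fy0 y0K FrK y0F KP by (auto simp: T0_def Tset_def)
  have finT0: "finite T0" using T0K finK finite_subset by blast
  have T0ne: "T0 \<noteq> {}" using T0K Frne by blast
  have cT0: "card T0 \<le> \<kappa>" using card_mono[OF finK T0K(1)] \<kappa>_def by simp
  have diffK: "\<And>c. c \<in> K \<Longrightarrow> val N E c C - val N E c P \<le> n * (real (card (friends N E c \<inter> C)) - real (card (friends N E c))) + real (card (enemies N E c \<inter> (P - C)))"
  proof -
    fix c assume cK': "c \<in> K"
    have "friends N E c \<inter> P = friends N E c" using FP[OF cK'] by auto
    then show "?thesis c" using val_diff[OF finN, of E c C P] n_def by simp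
  qed
  have MC: "\<And>c. c \<in> Fr \<Longrightarrow> mid c \<in> C"
  proof (rule ccontr)
    fix c0 assume c0F: "c0 \<in> Fr" and nm: "mid c0 \<notin> C"
    have "sum (\<lambda>c. val N E c C - val N E c P) T0 \<le> sum (\<lambda>c. (real d + 1) - (if c = c0 then n else 0)) T0"
    proof (rule sum_mono)
      fix c assume cT: "c \<in> T0"
      then have cK': "c \<in> K" using T0K by blast
      have e: "real (card (enemies N E c \<inter> (P - C))) \<le> real d + 1" using cEK[OF cK', of "P - C"] by simp
      have f: "card (friends N E c \<inter> C) \<le> card (friends N E c)" using finF by (intro card_mono) auto
      show "val N E c C - val N E c P \<le> (real d + 1) - (if c = c0 then n else 0)"
      proof (cases "c = c0")
        case True
        have "friends N E c \<inter> C \<subseteq> friends N E c - {mid c0}" using nm by blast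
        moreover have "mid c0 \<in> friends N E c" using FK[OF cK'] True c0F by simp
        ultimately have "card (friends N E c \<inter> C) \<le> card (friends N E c) - 1"
          using finF by (metis card_Diff_singleton card_mono finite_Diff)
        moreover have "card (friends N E c) \<ge> 1" using \<open>mid c0 \<in> friends N E c\<close> finF
          by (metis One_nat_def Suc_leI card_gt_0_iff empty_iff)
        ultimately have "real (card (friends N E c \<inter> C)) - real (card (friends N E c)) \<le> -1" by linarith
        then have "n * (real (card (friends N E c \<inter> C)) - real (card (friends N E c))) \<le> n * (-1)"
          using n0 by (intro mult_left_mono) auto
        then show ?thesis using diffK[OF cK'] e True by simp
      next
        case False
        have "n * (real (card (friends N E c \<inter> C)) - real (card (friends N E c))) \<le> 0"
          using f n0 by (simp add: mult_nonneg_nonpos)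
        then show ?thesis using diffK[OF cK'] e False by simp
      qed
    qed
    also have "... = real (card T0) * (real d + 1) - n" using finT0 T0K c0F by (simp add: sum_subtractf sum.delta' subset_iff)
    also have "... < 0"
    proof -
      have "real (card T0) * (real d + 1) \<le> real \<kappa> * (real d + 1)" using cT0 by (intro mult_right_mono) auto
      then show ?thesis using kapn by linarith
    qed
    finally have "sum (\<lambda>c. val N E c C) T0 < sum (\<lambda>c. val N E c P) T0" by (simp add: sum_subtractf)
    then have "avgset (\<lambda>c. val N E c C) T0 < avgset (\<lambda>c. val N E c P) T0"
      by (rule avgset_strict_same[OF finT0 T0ne])
    then show False using avgU[OF y0K KC[THEN subsetD, OF y0K]] T0eq unfolding T0_def by simp
  qed
  have pC: "p \<in> C"
  proof (rule ccontr)
    assume npC: "p \<notin> C"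
    obtain y where yF: "y \<in> Fr" using Frne by blast
    have yK: "y \<in> K" using yF FrK by blast
    define m where "m = mid y"
    have mC: "m \<in> C" using MC[OF yF] m_def by simp
    have Fy: "friends N E y = insert m (K - {y})" using FK[OF yK] yF m_def by auto
    define T where "T = Tset b N E y P"
    have Teq: "Tset b N E y C = T" using Fy KC KP mC midP[OF yF] m_def unfolding T_def Tset_def by auto
    have TK: "T \<subseteq> insert m K" "m \<in> T" using Fy yK midP[OF yF] m_def by (auto simp: T_def Tset_def)
    have finT: "finite T" using TK finK finite_subset by blast
    have Tne: "T \<noteq> {}" using TK by blast
    have PC: "P - C \<subseteq> {p}" using Pdec KC MC by auto
    have mK: "m \<notin> K" using midP[OF yF] m_def by blast
    have cT: "card T \<le> k'"
    proof -
      have "T \<subseteq> P" using TK KP midP[OF yF] m_def by auto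
      then show ?thesis using card_mono[OF finP] cP by (meson le_trans)
    qed
    have "sum (\<lambda>c. val N E c C - val N E c P) T \<le> sum (\<lambda>c. 1 - (if c = m then n + 1 else 0)) T"
    proof (rule sum_mono)
      fix c assume cT': "c \<in> T"
      show "val N E c C - val N E c P \<le> 1 - (if c = m then n + 1 else 0)"
      proof (cases "c = m")
        case True
        have Fm: "friends N E m \<subseteq> P" "p \<in> friends N E m" using Fmid[OF yF] m_def by auto
        have "friends N E m \<inter> P = friends N E m" using Fm by auto
        moreover have "friends N E m \<inter> C \<subseteq> friends N E m - {p}" using npC by blast
        ultimately have a: "card (friends N E m \<inter> C) + 1 \<le> card (friends N E m \<inter> P)"
          using finF Fm by (metis card_Diff_singleton card_mono finite_Diff One_nat_def Suc_leI card_gt_0_iff empty_iff le_diff_conv2)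
        have "enemies N E m \<inter> (P - C) = {}" using PC Fm unfolding enemies_def by auto
        then have "val N E m C - val N E m P \<le> n * (real (card (friends N E m \<inter> C)) - real (card (friends N E m \<inter> P)))"
          using val_diff[OF finN, of E m C P] n_def by simp
        also have "... \<le> n * (-1)" using a n0 by (intro mult_left_mono) auto
        finally show ?thesis using True by simp
      next
        case False
        then have cK': "c \<in> K" using cT' TK by blast
        have "friends N E c \<subseteq> C" using FK[OF cK'] KC MC by auto
        then have "friends N E c \<inter> C = friends N E c" by blast
        moreover have "card (enemies N E c \<inter> (P - C)) \<le> 1"
        proof -
          have "card (enemies N E c \<inter> (P - C)) \<le> card {p}" using PC by (intro card_mono) auto
          then show ?thesis by simp
        qed
        ultimately show ?thesis using diffK[OF cK'] False by simp
      qed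
    qed
    also have "... = real (card T) - (n + 1)" using finT TK by (simp add: sum_subtractf sum.delta')
    also have "... < 0" using cT kn by simp
    finally have "sum (\<lambda>c. val N E c C) T < sum (\<lambda>c. val N E c P) T" by (simp add: sum_subtractf)
    then have "avgset (\<lambda>c. val N E c C) T < avgset (\<lambda>c. val N E c P) T"
      by (rule avgset_strict_same[OF finT Tne])
    then show False using avgU[OF yK KC[THEN subsetD, OF yK]] Teq unfolding T_def by simp
  qed
  have PC: "P \<subseteq> C" using Pdec KC MC pC by auto
  have le: "\<And>c. c \<in> K \<Longrightarrow> val N E c C \<le> val N E c P"
  proof -
    fix c assume cK': "c \<in> K"
    have "friends N E c \<inter> C = friends N E c" using FP[OF cK'] PC by auto
    moreover have "enemies N E c \<inter> (P - C) = {}" using PC by auto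
    ultimately show "val N E c C \<le> val N E c P" using diffK[OF cK'] by simp
  qed
  have "sum (\<lambda>c. val N E c C) T0 \<le> sum (\<lambda>c. val N E c P) T0"
    using le T0K by (intro sum_mono) auto
  then have "avgset (\<lambda>c. val N E c C) T0 \<le> avgset (\<lambda>c. val N E c P) T0" by (rule avgset_mono_same)
  then have "U y0 C \<le> U y0 P" using U2[OF y0K] le[OF y0K] T0eq unfolding T0_def by simp
  then show False using blk[OF KC[THEN subsetD, OF y0K] y0K] by simp
qed
lemma doubleton_eq: "{a, b} = {c, e} \<longleftrightarrow> (a = c \<and> b = e) \<or> (a = e \<and> b = c)"
  by (auto simp: doubleton_eq_iff)

lemma dome_absg:
  assumes finN: "finite N" and G: "dome_gadget N E d k' P p m K fr"
    and isolated: "\<forall>x \<in> P - {p}. \<forall>y \<in> N - P. \<not> E x y"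
  shows "absg N E d k' P p K (fr ` {1..d}) (\<lambda>c. m (inv_into {1..d} fr c))"
proof -
  have d1: "d \<ge> 1" using G unfolding dome_gadget_def by (elim conjE) assumption
  have PN: "P \<subseteq> N" using G unfolding dome_gadget_def by (elim conjE) assumption
  have cPk: "card P = k'" using G unfolding dome_gadget_def by (elim conjE) assumption
  have pP: "p \<in> P" using G unfolding dome_gadget_def by (elim conjE) assumption
  have im: "inj_on m {1..d}" using G unfolding dome_gadget_def by (elim conjE) assumption
  have mP: "m ` {1..d} \<subseteq> P" using G unfolding dome_gadget_def by (elim conjE) assumption
  have pm: "p \<notin> m ` {1..d}" using G unfolding dome_gadget_def by (elim conjE) assumption
  have Kd: "K = P - {p} - m ` {1..d}" using G unfolding dome_gadget_def by (elim conjE) assumption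
  have ifr: "inj_on fr {1..d}" using G unfolding dome_gadget_def by (elim conjE) assumption
  have frK: "fr ` {1..d} \<subseteq> K" using G unfolding dome_gadget_def by (elim conjE) assumption
  have rel: "\<forall>x\<in>P. \<forall>y\<in>P. E x y \<longleftrightarrow> ((\<exists>j\<in>{1..d}. {x,y} = {p, m j} \<or> {x,y} = {m j, fr j}) \<or> (x \<in> K \<and> y \<in> K \<and> x \<noteq> y))" using G unfolding dome_gadget_def by (elim conjE) assumption
  define M where "M = m ` {1..d}"
  define mid where "mid = (\<lambda>c. m (inv_into {1..d} fr c))"
  have midfr: "\<And>j. j \<in> {1..d} \<Longrightarrow> mid (fr j) = m j" unfolding mid_def using ifr by simp
  have finP: "finite P" using PN finN finite_subset by blast
  have cM: "card M = d" unfolding M_def using im by (simp add: card_image)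
  have MP: "M \<subseteq> P - {p}" using mP pm M_def by auto
  have KP: "K \<subseteq> P" using Kd by auto
  have pK: "p \<notin> K" using Kd by auto
  have PK: "P - K = insert p M" using Kd MP pP M_def by auto
  have cPK: "card (P - K) = d + 1"
  proof -
    have "finite M" using MP finP finite_subset by blast
    then show ?thesis using PK cM pm M_def by simp
  qed
  have cK: "card K = k' - d - 1"
  proof -
    have "card K = card P - card (P - K)" using KP finP
      by (metis card_Diff_subset double_diff dual_order.refl finite_subset diff_diff_cancel card_mono)
    then show ?thesis using cPK cPk by simp
  qed
  have mK: "\<And>j. j \<in> {1..d} \<Longrightarrow> m j \<notin> K" using Kd by auto
  have MK: "\<And>j. j \<in> {1..d} \<Longrightarrow> m j \<in> P \<and> m j \<noteq> p" using mP pm by auto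
  have frK': "\<And>j. j \<in> {1..d} \<Longrightarrow> fr j \<in> K" using frK by auto
  have iso: "\<And>x y. x \<in> P \<Longrightarrow> x \<noteq> p \<Longrightarrow> E x y \<Longrightarrow> y \<in> N \<Longrightarrow> y \<in> P" using isolated by blast
  have FK: "\<forall>c\<in>K. friends N E c = (K - {c}) \<union> (if c \<in> fr ` {1..d} then {mid c} else {})"
  proof
    fix c assume cK: "c \<in> K"
    have cP: "c \<in> P" "c \<noteq> p" using cK KP pK by auto
    have cM: "\<And>j. j \<in> {1..d} \<Longrightarrow> c \<noteq> m j" using cK mK by blast
    show "friends N E c = (K - {c}) \<union> (if c \<in> fr ` {1..d} then {mid c} else {})"
    proof (rule set_eqI)
      fix y
      show "y \<in> friends N E c \<longleftrightarrow> y \<in> (K - {c}) \<union> (if c \<in> fr ` {1..d} then {mid c} else {})"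
      proof
        assume "y \<in> friends N E c"
        then have yN: "y \<in> N" and Ey: "E c y" by (auto simp: friends_def)
        then have yP: "y \<in> P" using iso cP by blast
        from rel cP yP Ey have "(\<exists>j\<in>{1..d}. {c,y} = {p, m j} \<or> {c,y} = {m j, fr j}) \<or> (c \<in> K \<and> y \<in> K \<and> c \<noteq> y)" by blast
        then show "y \<in> (K - {c}) \<union> (if c \<in> fr ` {1..d} then {mid c} else {})"
        proof
          assume "\<exists>j\<in>{1..d}. {c,y} = {p, m j} \<or> {c,y} = {m j, fr j}"
          then obtain j where j: "j \<in> {1..d}" and "{c,y} = {p, m j} \<or> {c,y} = {m j, fr j}" by blast
          then have "c = fr j \<and> y = m j" using cP cM[OF j] by (auto simp: doubleton_eq)
          then show ?thesis using j midfr by auto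
        qed auto
      next
        assume "y \<in> (K - {c}) \<union> (if c \<in> fr ` {1..d} then {mid c} else {})"
        then consider "y \<in> K - {c}" | j where "j \<in> {1..d}" "c = fr j" "y = mid c" by (auto split: if_splits)
        then show "y \<in> friends N E c"
        proof cases
          case 1 then show ?thesis using rel cK KP PN by (auto simp: friends_def)
        next
          case 2
          then have "y = m j" using midfr by simp
          then show ?thesis using rel cP 2 MK PN by (auto simp: friends_def)
        qed
      qed
    qed
  qed
  have Fmid: "\<forall>c\<in>fr ` {1..d}. friends N E (mid c) \<subseteq> P \<and> p \<in> friends N E (mid c) \<and> c \<in> friends N E (mid c) \<and> card (friends N E (mid c)) \<le> d + 1"
  proof
    fix c assume "c \<in> fr ` {1..d}"
    then obtain j where j: "j \<in> {1..d}" and cj: "c = fr j" by blast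
    have mc: "mid c = m j" using midfr j cj by simp
    have mj: "m j \<in> P" "m j \<noteq> p" "m j \<notin> K" using MK mK j by auto
    have sub: "friends N E (m j) \<subseteq> {p, fr j}"
    proof
      fix y assume "y \<in> friends N E (m j)"
      then have yN: "y \<in> N" and Ey: "E (m j) y" by (auto simp: friends_def)
      then have yP: "y \<in> P" using iso mj by blast
      from rel mj yP Ey have "(\<exists>i\<in>{1..d}. {m j,y} = {p, m i} \<or> {m j,y} = {m i, fr i}) \<or> (m j \<in> K \<and> y \<in> K \<and> m j \<noteq> y)" by blast
      then show "y \<in> {p, fr j}"
      proof
        assume "\<exists>i\<in>{1..d}. {m j,y} = {p, m i} \<or> {m j,y} = {m i, fr i}"
        then obtain i where i: "i \<in> {1..d}" and h: "{m j,y} = {p, m i} \<or> {m j,y} = {m i, fr i}" by blast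
        have "fr i \<in> K" using frK' i by blast
        then have "m j \<noteq> fr i" using mj(3) by metis
        then show ?thesis using h mj im i j by (auto simp: doubleton_eq dest: inj_onD)
      qed (use mj in auto)
    qed
    have fjP: "fr j \<in> P" using frK' j KP by blast
    have E1: "E (m j) p" using rel[rule_format, OF mj(1) pP] j by blast
    have E2: "E (m j) (fr j)" using rel[rule_format, OF mj(1) fjP] j by blast
    have "friends N E (m j) \<subseteq> P" using sub pP frK' j KP by auto
    moreover have "p \<in> friends N E (m j)" using E1 pP PN by (auto simp: friends_def)
    moreover have "fr j \<in> friends N E (m j)" using E2 fjP PN by (auto simp: friends_def)
    moreover have "card (friends N E (m j)) \<le> d + 1"
    proof -
      have "card (friends N E (m j)) \<le> card {p, fr j}" using sub by (intro card_mono) auto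
      also have "... \<le> 2" by (simp add: card_insert_if)
      finally show ?thesis using d1 by simp
    qed
    ultimately show "friends N E (mid c) \<subseteq> P \<and> p \<in> friends N E (mid c) \<and> c \<in> friends N E (mid c) \<and> card (friends N E (mid c)) \<le> d + 1"
      using mc cj by simp
  qed
  have midM: "mid ` fr ` {1..d} = M" unfolding M_def image_image by (rule image_cong) (auto simp: midfr)
  have "P = insert p (K \<union> M)" using Kd MP pP unfolding M_def by blast
  then have Pdec: "P = insert p (K \<union> mid ` fr ` {1..d})" using midM by simp
  have cFr: "card (fr ` {1..d}) \<le> d" using ifr by (simp add: card_image)
  have Frne: "fr ` {1..d} \<noteq> {}" using d1 by auto
  have midP: "\<forall>c\<in>fr ` {1..d}. mid c \<in> P \<and> mid c \<notin> K \<and> mid c \<noteq> p" using midfr MK mK by auto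
  show ?thesis unfolding absg_def mid_def[symmetric]
    using PN pP KP pK cK cPk cPK frK Frne cFr midP Pdec FK Fmid by simp
qed
lemma pinched_absg:
  assumes finN: "finite N" and G: "pinched_dome_gadget N E d k' P p q K fr"
    and isolated: "\<forall>x \<in> P - {p}. \<forall>y \<in> N - P. \<not> E x y"
  shows "absg N E d k' P p K (fr ` {1..d}) (\<lambda>c. q)"
proof -
  have d1: "d \<ge> 1" using G unfolding pinched_dome_gadget_def by (elim conjE) assumption
  have kd: "k' > 2*d+1" using G unfolding pinched_dome_gadget_def by (elim conjE) assumption
  have PN: "P \<subseteq> N" using G unfolding pinched_dome_gadget_def by (elim conjE) assumption
  have finK: "finite K" using G unfolding pinched_dome_gadget_def by (elim conjE) assumption
  have cK: "card K = k' - d - 1" using G unfolding pinched_dome_gadget_def by (elim conjE) assumption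
  have pq: "p \<noteq> q" using G unfolding pinched_dome_gadget_def by (elim conjE) assumption
  have pK: "p \<notin> K" using G unfolding pinched_dome_gadget_def by (elim conjE) assumption
  have qK: "q \<notin> K" using G unfolding pinched_dome_gadget_def by (elim conjE) assumption
  have Pd: "P = insert p (insert q K)" using G unfolding pinched_dome_gadget_def by (elim conjE) assumption
  have ifr: "inj_on fr {1..d}" using G unfolding pinched_dome_gadget_def by (elim conjE) assumption
  have frK: "fr ` {1..d} \<subseteq> K" using G unfolding pinched_dome_gadget_def by (elim conjE) assumption
  have rel: "\<forall>x\<in>P. \<forall>y\<in>P. E x y \<longleftrightarrow>
        ({x,y} = {p, q} \<or> (\<exists>j\<in>{1..d}. {x,y} = {q, fr j}) \<or> (x \<in> K \<and> y \<in> K \<and> x \<noteq> y))"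
    using G unfolding pinched_dome_gadget_def by (elim conjE) assumption
  define Fr where "Fr = fr ` {1..d}"
  have pP: "p \<in> P" and qP: "q \<in> P" and KP: "K \<subseteq> P" using Pd by auto
  have cP: "card P = k' - d + 1" using Pd finK pK qK pq cK kd by simp
  have PK: "P - K = {p, q}" using Pd pK qK by auto
  have cPK: "card (P - K) \<le> d + 1" using PK pq d1 by simp
  have iso: "\<And>x y. x \<in> P \<Longrightarrow> x \<noteq> p \<Longrightarrow> E x y \<Longrightarrow> y \<in> N \<Longrightarrow> y \<in> P" using isolated by blast
  have FK: "\<forall>c\<in>K. friends N E c = (K - {c}) \<union> (if c \<in> Fr then {q} else {})"
  proof
    fix c assume cK': "c \<in> K"
    have cP': "c \<in> P" "c \<noteq> p" "c \<noteq> q" using cK' KP pK qK by auto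
    show "friends N E c = (K - {c}) \<union> (if c \<in> Fr then {q} else {})"
    proof (rule set_eqI)
      fix y
      show "y \<in> friends N E c \<longleftrightarrow> y \<in> (K - {c}) \<union> (if c \<in> Fr then {q} else {})"
      proof
        assume "y \<in> friends N E c"
        then have yN: "y \<in> N" and Ey: "E c y" by (auto simp: friends_def)
        then have yP: "y \<in> P" using iso cP' by blast
        from rel cP' yP Ey have "{c,y} = {p, q} \<or> (\<exists>j\<in>{1..d}. {c,y} = {q, fr j}) \<or> (c \<in> K \<and> y \<in> K \<and> c \<noteq> y)" by blast
        then show "y \<in> (K - {c}) \<union> (if c \<in> Fr then {q} else {})"
          using cP' unfolding Fr_def by (auto simp: doubleton_eq)
      next
        assume "y \<in> (K - {c}) \<union> (if c \<in> Fr then {q} else {})"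
        then consider "y \<in> K - {c}" | j where "j \<in> {1..d}" "c = fr j" "y = q"
          unfolding Fr_def by (auto split: if_splits)
        then show "y \<in> friends N E c"
        proof cases
          case 1
          then have "y \<in> P" using KP by blast
          then have "E c y" using rel[rule_format, OF cP'(1)] 1 cK' by blast
          then show ?thesis using \<open>y \<in> P\<close> PN by (auto simp: friends_def)
        next
          case 2
          then have "E c y" using rel[rule_format, OF cP'(1) qP] by (auto simp: doubleton_eq)
          then show ?thesis using 2 qP PN by (auto simp: friends_def)
        qed
      qed
    qed
  qed
  have subq: "friends N E q \<subseteq> insert p Fr"
  proof
    fix y assume "y \<in> friends N E q"
    then have yN: "y \<in> N" and Ey: "E q y" by (auto simp: friends_def)
    then have yP: "y \<in> P" using iso qP pq by blast
    from rel qP yP Ey have "{q,y} = {p, q} \<or> (\<exists>j\<in>{1..d}. {q,y} = {q, fr j}) \<or> (q \<in> K \<and> y \<in> K \<and> q \<noteq> y)" by blast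
    then show "y \<in> insert p Fr" using qK unfolding Fr_def by (auto simp: doubleton_eq)
  qed
  have Fq: "\<forall>c\<in>Fr. friends N E q \<subseteq> P \<and> p \<in> friends N E q \<and> c \<in> friends N E q \<and> card (friends N E q) \<le> d + 1"
  proof
    fix c assume cF: "c \<in> Fr"
    then obtain j where j: "j \<in> {1..d}" and cj: "c = fr j" unfolding Fr_def by blast
    have cP': "c \<in> P" using cF frK KP Fr_def by blast
    have "friends N E q \<subseteq> P" using subq pP frK KP Fr_def by auto
    moreover have "E q p" using rel[rule_format, OF qP pP] by (auto simp: doubleton_eq)
    then have "p \<in> friends N E q" using pP PN by (auto simp: friends_def)
    moreover have "E q c" using rel[rule_format, OF qP cP'] j cj by blast
    then have "c \<in> friends N E q" using cP' PN by (auto simp: friends_def)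
    moreover have "card (friends N E q) \<le> d + 1"
    proof -
      have "finite Fr" unfolding Fr_def by simp
      then have "card (friends N E q) \<le> card (insert p Fr)" using subq by (intro card_mono) auto
      also have "... \<le> Suc (card Fr)" using \<open>finite Fr\<close> by (simp add: card_insert_if)
      also have "card Fr \<le> d" unfolding Fr_def using card_image_le[of "{1..d}" fr] by simp
      finally show ?thesis by simp
    qed
    ultimately show "friends N E q \<subseteq> P \<and> p \<in> friends N E q \<and> c \<in> friends N E q \<and> card (friends N E q) \<le> d + 1"
      by blast
  qed
  have cFr: "card Fr \<le> d" unfolding Fr_def using card_image_le[of "{1..d}" fr] by simp
  have Frne: "Fr \<noteq> {}" using d1 Fr_def by auto
  have Pdec: "P = insert p (K \<union> (\<lambda>c. q) ` Fr)" using Pd Frne by auto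
  have cP2: "card P \<le> k'" using cP d1 kd by simp
  show ?thesis unfolding absg_def Fr_def[symmetric]
    using PN pP KP pK cK cP2 cPK frK Frne cFr Pdec FK Fq qP pq qK Fr_def by simp
qed
theorem proposition1:
  fixes N :: "'a set" and E :: "'a \<Rightarrow> 'a \<Rightarrow> bool"
    and util :: "'a \<Rightarrow> 'a set \<Rightarrow> real" and w :: real
    and d k' :: nat and P K C :: "'a set" and p :: 'a and \<Gamma> :: "'a set set"
  assumes finN: "finite N"
    and symE: "\<forall>x y. E x y \<longrightarrow> E y x"
    and irrE: "\<forall>x. \<not> E x x"
    and d1: "d \<ge> 1"
    and kd: "k' > 2*d+3"
    and nk: "card N \<ge> k' * (d+1)"
    and util: "util = util_avgEQ N E \<or> (util = util_avgAL N E w \<and> w \<ge> real (card N) ^ 4)"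
    and gadget: "(\<exists>m fr. dome_gadget N E d k' P p m K fr) \<or>
                 (\<exists>q fr. pinched_dome_gadget N E d k' P p q K fr)"
    and isolated: "\<forall>x \<in> P - {p}. \<forall>y \<in> N - P. \<not> E x y"
    and part: "partition_on N \<Gamma>"
    and PG: "P \<in> \<Gamma>"
    and blk: "blocks N util \<Gamma> C"
  shows "C \<inter> K = {}"
proof -
  have "\<exists>Fr mid. absg N E d k' P p K Fr mid"
  proof (cases "\<exists>m fr. dome_gadget N E d k' P p m K fr")
    case True
    then obtain m fr where "dome_gadget N E d k' P p m K fr" by blast
    from dome_absg[OF finN this isolated] show ?thesis by blast
  next
    case False
    then obtain q fr where "pinched_dome_gadget N E d k' P p q K fr" using gadget by blast
    from pinched_absg[OF finN this isolated] show ?thesis by blast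
  qed
  then obtain Fr mid where G: "absg N E d k' P p K Fr mid" by blast
  have PN: "P \<subseteq> N" using G unfolding absg_def by (elim conjE) assumption
  have KP: "K \<subseteq> P" using G unfolding absg_def by (elim conjE) assumption
  have cP: "card P \<le> k'" using G unfolding absg_def by (elim conjE) assumption
  have FK: "\<forall>c\<in>K. friends N E c = (K - {c}) \<union> (if c \<in> Fr then {mid c} else {})"
    using G unfolding absg_def by (elim conjE) assumption
  have midP: "\<forall>c\<in>Fr. mid c \<in> P \<and> mid c \<notin> K \<and> mid c \<noteq> p"
    using G unfolding absg_def by (elim conjE) assumption
  have FP: "\<And>y. y \<in> K \<Longrightarrow> friends N E y \<subseteq> P" using FK midP KP by auto
  have blkK: "\<And>y. y \<in> C \<Longrightarrow> y \<in> K \<Longrightarrow> util y C > util y P"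
  proof -
    fix y assume "y \<in> C" "y \<in> K"
    then have "util y C > util y (coal_of \<Gamma> y)" using blk unfolding blocks_def by blast
    moreover have "coal_of \<Gamma> y = P" using coal[OF part PG] \<open>y \<in> K\<close> KP by blast
    ultimately show "util y C > util y P" by simp
  qed
  have k1a: "1 \<le> k'" using kd by simp
  have "k' * 2 \<le> k' * (d + 1)" using d1 by (intro mult_le_mono2) simp
  from le_trans[OF this nk] have k1b: "2 * k' \<le> card N" by (simp add: mult.commute)
  from util show ?thesis
  proof
    assume uEQ: "util = util_avgEQ N E"
    show ?thesis
    proof (rule core[OF finN G d1 kd nk, where U = util and b = True])
      fix y assume "y \<in> K"
        "avgset (\<lambda>c. val N E c C) (Tset True N E y C) < avgset (\<lambda>c. val N E c P) (Tset True N E y P)"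
      then show "util y C < util y P" using uEQ by (simp add: EQ_avg)
    next
      fix y assume "y \<in> K"
        "avgset (\<lambda>c. val N E c C) (Tset True N E y C) \<le> avgset (\<lambda>c. val N E c P) (Tset True N E y P)"
      then show "util y C \<le> util y P" using uEQ by (simp add: EQ_avg)
    qed (use blkK in auto)
  next
    assume uAL: "util = util_avgAL N E w \<and> w \<ge> real (card N) ^ 4"
    have w0: "w \<ge> 0" using uAL by (smt (verit) zero_le_power of_nat_0_le_iff)
    show ?thesis
    proof (rule core[OF finN G d1 kd nk, where U = util and b = False])
      fix y assume yK: "y \<in> K"
        and lt: "avgset (\<lambda>c. val N E c C) (Tset False N E y C) < avgset (\<lambda>c. val N E c P) (Tset False N E y P)"
      have "avg_F N E y C < avg_F N E y P" using lt by (simp add: AL_avg)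
      then show "util y C < util y P"
        using AL_U1[OF finN FP[OF yK] PN cP k1b k1a, of w C] uAL by simp
    next
      fix y assume yK: "y \<in> K"
        and le: "avgset (\<lambda>c. val N E c C) (Tset False N E y C) \<le> avgset (\<lambda>c. val N E c P) (Tset False N E y P)"
        and lv: "val N E y C \<le> val N E y P"
      have "avg_F N E y C \<le> avg_F N E y P" using le by (simp add: AL_avg)
      then have "w * avg_F N E y C \<le> w * avg_F N E y P" using w0 by (rule mult_left_mono)
      then show "util y C \<le> util y P" using uAL lv by (simp add: util_avgAL_def)
    qed (use blkK in auto)
  qed
qed

end
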